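(* Let $G$ be a looped simple graph and $\nu$ a positive integer. Then $G$ has a transverse matroid of nullity $\nu$ if and only if some looped simple graph locally equivalent to $G$ has a stable set of size $\nu$.
   Context: A looped simple graph is a finite graph in which each vertex carries at most one loop and no two distinct vertices are joined by more than one edge. "Adjacent"/"neighbors" refer only to distinct vertices joined by a non-loop edge; a stable set is a set of vertices no two of which are adjacent. $A(G)$ is the $V(G)\times V(G)$ matrix over $GF(2)$ with diagonal entry $1$ exactly at looped vertices and off-diagonal entry $1$ exactly for adjacent pairs. $IAS(G)=(I\mid A(G)\mid A(G)+I)$ over $GF(2)$, rows indexed by $V(G)$; for $v\in V(G)$ the $v$-columns of the three blocks are labelled $\phi_G(v),\chi_G(v),\psi_G(v)$. The isotropic matroid $M[IAS(G)]$ is the binary column matroid of $IAS(G)$ on $W(G)=\{\phi_G(v),\chi_G(v),\psi_G(v):v\in V(G)\}$. The vertex triple of $v$ is $\tau_G(v)=\{\phi_G(v),\chi_G(v),\psi_G(v)\}$. A transversal is a subset of $W(G)$ meeting each vertex triple in exactly one element; a transverse matroid of $G$ is the restriction of $M[IAS(G)]$ to a transversal. The nullity of a matroid is the size of its ground set minus its rank. Local equivalence: $G_\ell^v$ is obtained from $G$ by complementing the loop status of $v$; $G_s^v$ by complementing the adjacency status of every pair of distinct neighbors of $v$; $G_{ns}^v$ by doing this and also complementing the loop status of every neighbor of $v$. $H$ is locally equivalent to $G$ if $H$ is obtained from $G$ by a finite sequence of such operations. *)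

theory Defs
  imports Main
begin

record 'v lgraph =
  verts :: "'v set"
  adj   :: "'v \<Rightarrow> 'v \<Rightarrow> bool"
  loops :: "'v set"

definition looped_simple_graph :: "('v, 'm) lgraph_scheme \<Rightarrow> bool" where
  "looped_simple_graph G \<longleftrightarrow>
     finite (verts G) \<and> loops G \<subseteq> verts G \<and>
     (\<forall>x y. adj G x y \<longrightarrow> x \<in> verts G \<and> y \<in> verts G \<and> x \<noteq> y) \<and>
     (\<forall>x y. adj G x y \<longleftrightarrow> adj G y x)"

text \<open>Adjacency matrix over GF(2), entries as booleans (True = 1).\<close>
definition adjmat :: "'v lgraph \<Rightarrow> 'v \<Rightarrow> 'v \<Rightarrow> bool" where
  "adjmat G w v = (if w = v then v \<in> loops G else adj G w v)"

datatype label = Phi | Chi | Psi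

text \<open>Element (l, v) of W(G) stands for phi_G(v), chi_G(v), psi_G(v).\<close>
definition W :: "'v lgraph \<Rightarrow> (label \<times> 'v) set" where
  "W G = UNIV \<times> verts G"

text \<open>Entry in row w of the column of IAS(G) labelled x.\<close>
fun IAS :: "'v lgraph \<Rightarrow> label \<times> 'v \<Rightarrow> 'v \<Rightarrow> bool" where
  "IAS G (Phi, v) w = (w = v)"
| "IAS G (Chi, v) w = adjmat G w v"
| "IAS G (Psi, v) w = (adjmat G w v \<noteq> (w = v))"

text \<open>Independence in the binary column matroid: no nonempty subset of the columns
sums to zero over GF(2), i.e. for each nonempty subset some row has odd count of 1s.\<close>
definition indep :: "'v lgraph \<Rightarrow> (label \<times> 'v) set \<Rightarrow> bool" where
  "indep G S \<longleftrightarrow> S \<subseteq> W G \<and>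
     (\<forall>S'\<subseteq>S. S' \<noteq> {} \<longrightarrow> (\<exists>w\<in>verts G. odd (card {x\<in>S'. IAS G x w})))"

definition mrank :: "'v lgraph \<Rightarrow> (label \<times> 'v) set \<Rightarrow> nat" where
  "mrank G T = Max {card I | I. I \<subseteq> T \<and> indep G I}"

definition nullity :: "'v lgraph \<Rightarrow> (label \<times> 'v) set \<Rightarrow> nat" where
  "nullity G T = card T - mrank G T"

definition vtriple :: "'v lgraph \<Rightarrow> 'v \<Rightarrow> (label \<times> 'v) set" where
  "vtriple G v = UNIV \<times> {v}"

definition transversal :: "'v lgraph \<Rightarrow> (label \<times> 'v) set \<Rightarrow> bool" where
  "transversal G T \<longleftrightarrow> T \<subseteq> W G \<and> (\<forall>v\<in>verts G. card (T \<inter> vtriple G v) = 1)"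

definition has_transverse_nullity :: "'v lgraph \<Rightarrow> nat \<Rightarrow> bool" where
  "has_transverse_nullity G \<nu> \<longleftrightarrow> (\<exists>T. transversal G T \<and> nullity G T = \<nu>)"

definition loop_comp :: "'v \<Rightarrow> 'v lgraph \<Rightarrow> 'v lgraph" where
  "loop_comp v G = G\<lparr>loops := (if v \<in> loops G then loops G - {v} else insert v (loops G))\<rparr>"

definition simple_lc :: "'v \<Rightarrow> 'v lgraph \<Rightarrow> 'v lgraph" where
  "simple_lc v G = G\<lparr>adj := (\<lambda>x y. if x \<noteq> y \<and> adj G v x \<and> adj G v y
                                   then \<not> adj G x y else adj G x y)\<rparr>"

definition nonsimple_lc :: "'v \<Rightarrow> 'v lgraph \<Rightarrow> 'v lgraph" where
  "nonsimple_lc v G = (simple_lc v G)\<lparr>loops :=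
      {x \<in> verts G. (x \<in> loops G) \<noteq> adj G v x}\<rparr>"

inductive locally_equivalent :: "'v lgraph \<Rightarrow> 'v lgraph \<Rightarrow> bool" where
  refl: "locally_equivalent G G"
| loop: "locally_equivalent G H \<Longrightarrow> v \<in> verts H \<Longrightarrow> locally_equivalent G (loop_comp v H)"
| simple: "locally_equivalent G H \<Longrightarrow> v \<in> verts H \<Longrightarrow> locally_equivalent G (simple_lc v H)"
| nonsimple: "locally_equivalent G H \<Longrightarrow> v \<in> verts H \<Longrightarrow> locally_equivalent G (nonsimple_lc v H)"

definition stable_set :: "'v lgraph \<Rightarrow> 'v set \<Rightarrow> bool" where
  "stable_set G S \<longleftrightarrow> S \<subseteq> verts G \<and> (\<forall>x\<in>S. \<forall>y\<in>S. \<not> adj G x y)"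

end

theory Submission
  imports Defs
begin

definition colsum :: "'v lgraph \<Rightarrow> (label \<times> 'v) set \<Rightarrow> 'v \<Rightarrow> bool" where
  "colsum G S w = odd (card {x\<in>S. IAS G x w})"

definition Tr :: "('v \<Rightarrow> label) \<Rightarrow> 'v set \<Rightarrow> (label \<times> 'v) set" where
  "Tr t V = (\<lambda>v. (t v, v)) ` V"

lemma parity:
  assumes "finite S"
  shows "odd (card {x\<in>S. P x \<noteq> Q x}) = (odd (card {x\<in>S. P x}) \<noteq> odd (card {x\<in>S. Q x}))"
  using assms
proof (induction rule: finite_induct)
  case empty then show ?case by simp
next
  case (insert a S)
  have e: "\<And>R. {x\<in>insert a S. R x} = (if R a then insert a {x\<in>S. R x} else {x\<in>S. R x})"
    by auto
  have c: "\<And>R. card (insert a {x\<in>S. R x}) = Suc (card {x\<in>S. R x})"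
    using insert by simp
  show ?case unfolding e using insert.IH by (auto simp: c)
qed

lemma parity_diff:
  assumes "finite A" "finite B"
  shows "odd (card {x\<in>(A-B)\<union>(B-A). P x}) = (odd (card {x\<in>A. P x}) \<noteq> odd (card {x\<in>B. P x}))"
proof -
  have e1: "{x\<in>(A-B)\<union>(B-A). P x} = {x\<in>A\<union>B. (x\<in>A \<and> P x) \<noteq> (x \<in> B \<and> P x)}" by auto
  have e2: "{x\<in>A. P x} = {x\<in>A\<union>B. x\<in>A \<and> P x}" by auto
  have e3: "{x\<in>B. P x} = {x\<in>A\<union>B. x\<in>B \<and> P x}" by auto
  have f: "finite (A\<union>B)" using assms by simp
  show ?thesis unfolding e1 e2 e3 by (rule parity[OF f])
qed

lemma transversal_Tr: "transversal G T \<longleftrightarrow> (\<exists>t. T = Tr t (verts G))"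
proof
  assume a: "transversal G T"
  define t where "t v = (THE l. (l,v)\<in>T)" for v
  have uq: "\<exists>!l. (l,v) \<in> T" if v: "v \<in> verts G" for v
  proof -
    from a v have "card (T \<inter> vtriple G v) = 1" unfolding transversal_def by blast
    then obtain x where x: "T \<inter> vtriple G v = {x}" by (rule card_1_singletonE)
    then obtain l where "x = (l,v)" unfolding vtriple_def by auto
    with x have "(l',v) \<in> T \<inter> vtriple G v \<longleftrightarrow> l' = l" for l' by auto
    then show ?thesis unfolding vtriple_def by auto
  qed
  have "T = Tr t (verts G)"
  proof
    show "T \<subseteq> Tr t (verts G)"
    proof
      fix x assume xT: "x \<in> T"
      obtain l v where x: "x = (l,v)" by force
      with xT a have v: "v \<in> verts G" unfolding transversal_def W_def by auto
      from uq[OF v] xT x have "t v = l" unfolding t_def by (auto intro: the1_equality)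
      with v x show "x \<in> Tr t (verts G)" unfolding Tr_def by auto
    qed
  next
    show "Tr t (verts G) \<subseteq> T"
    proof
      fix x assume "x \<in> Tr t (verts G)"
      then obtain v where v: "v \<in> verts G" and x: "x = (t v, v)" unfolding Tr_def by auto
      from theI'[OF uq[OF v]] show "x \<in> T" unfolding x t_def .
    qed
  qed
  then show "\<exists>t. T = Tr t (verts G)" by blast
next
  assume "\<exists>t. T = Tr t (verts G)"
  then obtain t where t: "T = Tr t (verts G)" by blast
  have "T \<inter> vtriple G v = {(t v, v)}" if "v \<in> verts G" for v
    using that unfolding t Tr_def vtriple_def by auto
  then have "\<forall>v\<in>verts G. card (T \<inter> vtriple G v) = 1" by simp
  moreover have "T \<subseteq> W G" unfolding t Tr_def W_def by auto
  ultimately show "transversal G T" unfolding transversal_def by blast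
qed

lemma has_tn_Tr: "has_transverse_nullity G \<nu> \<longleftrightarrow> (\<exists>t. nullity G (Tr t (verts G)) = \<nu>)"
  unfolding has_transverse_nullity_def transversal_Tr by blast


lemma UNIV_label: "(UNIV::label set) = {Phi,Chi,Psi}"
proof (rule set_eqI)
  fix x :: label show "x \<in> UNIV \<longleftrightarrow> x \<in> {Phi,Chi,Psi}" by (cases x) auto
qed

lemma finite_W: "finite (verts H) \<Longrightarrow> finite (W H)"
  unfolding W_def UNIV_label by simp

lemma indep_transfer:
  assumes inj: "inj \<sigma>" and sn: "\<And>x. snd (\<sigma> x) = snd x" and vv: "verts H' = verts H"
    and sums: "\<And>S. S \<subseteq> W H \<Longrightarrow> (\<exists>w\<in>verts H. colsum H S w) \<longleftrightarrow> (\<exists>w\<in>verts H. colsum H' (\<sigma>`S) w)"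
    and I: "I \<subseteq> W H"
  shows "indep H' (\<sigma>`I) \<longleftrightarrow> indep H I"
proof -
  have WW: "\<sigma> x \<in> W H' \<longleftrightarrow> x \<in> W H" for x
    using sn[of x] vv unfolding W_def by (cases x; cases "\<sigma> x") auto
  have sub: "\<sigma>`I \<subseteq> W H'" using I WW by auto
  show ?thesis
  proof
    assume a: "indep H' (\<sigma>`I)"
    show "indep H I" unfolding indep_def
    proof (intro conjI allI impI)
      show "I \<subseteq> W H" by (rule I)
      fix S' assume S': "S' \<subseteq> I" "S' \<noteq> {}"
      then have "\<sigma>`S' \<subseteq> \<sigma>`I" "\<sigma>`S' \<noteq> {}" by auto
      with a have "\<exists>w\<in>verts H'. colsum H' (\<sigma>`S') w" unfolding indep_def colsum_def by blast
      with sums[of S'] S' I vv show "\<exists>w\<in>verts H. odd (card {x \<in> S'. IAS H x w})"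
        unfolding colsum_def by auto
    qed
  next
    assume a: "indep H I"
    show "indep H' (\<sigma>`I)" unfolding indep_def
    proof (intro conjI allI impI)
      show "\<sigma>`I \<subseteq> W H'" by (rule sub)
      fix S'' assume S'': "S'' \<subseteq> \<sigma>`I" "S'' \<noteq> {}"
      define S' where "S' = {x\<in>I. \<sigma> x \<in> S''}"
      have e: "\<sigma>`S' = S''" using S'' unfolding S'_def by auto
      have "S' \<subseteq> I" "S' \<noteq> {}" using S'' e unfolding S'_def by auto
      with a have "\<exists>w\<in>verts H. colsum H S' w" unfolding indep_def colsum_def by blast
      with sums[of S'] \<open>S' \<subseteq> I\<close> I vv e show "\<exists>w\<in>verts H'. odd (card {x \<in> S''. IAS H' x w})"
        unfolding colsum_def by auto
    qed
  qed
qed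

lemma nullity_transfer:
  assumes inj: "inj \<sigma>" and sn: "\<And>x. snd (\<sigma> x) = snd x" and vv: "verts H' = verts H"
    and sums: "\<And>S. S \<subseteq> W H \<Longrightarrow> (\<exists>w\<in>verts H. colsum H S w) \<longleftrightarrow> (\<exists>w\<in>verts H. colsum H' (\<sigma>`S) w)"
    and T: "T \<subseteq> W H"
  shows "nullity H' (\<sigma>`T) = nullity H T"
proof -
  have "{card I | I. I \<subseteq> \<sigma>`T \<and> indep H' I} = {card I | I. I \<subseteq> T \<and> indep H I}"
  proof (intro equalityI subsetI)
    fix n assume "n \<in> {card I | I. I \<subseteq> \<sigma>`T \<and> indep H' I}"
    then obtain J where J: "n = card J" "J \<subseteq> \<sigma>`T" "indep H' J" by blast
    define I where "I = {x\<in>T. \<sigma> x \<in> J}"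
    have e: "\<sigma>`I = J" using J unfolding I_def by auto
    have "I \<subseteq> W H" using T unfolding I_def by auto
    then have "indep H I" using indep_transfer[OF inj sn vv sums] J e by blast
    moreover have "card I = n" using J e card_image[of \<sigma> I] inj by (simp add: inj_on_subset)
    ultimately show "n \<in> {card I | I. I \<subseteq> T \<and> indep H I}" unfolding I_def by blast
  next
    fix n assume "n \<in> {card I | I. I \<subseteq> T \<and> indep H I}"
    then obtain I where I: "n = card I" "I \<subseteq> T" "indep H I" by blast
    have "indep H' (\<sigma>`I)" using indep_transfer[OF inj sn vv sums] I T by blast
    moreover have "card (\<sigma>`I) = n" using I card_image[of \<sigma> I] inj by (simp add: inj_on_subset)
    moreover have "\<sigma>`I \<subseteq> \<sigma>`T" using I by auto
    ultimately show "n \<in> {card I | I. I \<subseteq> \<sigma>`T \<and> indep H' I}" by blast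
  qed
  moreover have "card (\<sigma>`T) = card T" using inj by (simp add: card_image inj_on_subset)
  ultimately show ?thesis unfolding nullity_def mrank_def by simp
qed

lemma rowop_colsum:
  assumes inj: "inj \<sigma>" and fin: "finite (verts H)" and S: "S \<subseteq> W H" and w: "w \<in> verts H"
    and rel: "\<And>x. x \<in> W H \<Longrightarrow> IAS H' (\<sigma> x) w = (IAS H x w \<noteq> (N \<and> IAS H x v))"
  shows "colsum H' (\<sigma>`S) w = (colsum H S w \<noteq> (N \<and> colsum H S v))"
proof -
  have fS: "finite S" using finite_subset[OF S finite_W[OF fin]] .
  have "{y\<in>\<sigma>`S. IAS H' y w} = \<sigma>`{x\<in>S. IAS H' (\<sigma> x) w}" by auto
  then have "card {y\<in>\<sigma>`S. IAS H' y w} = card {x\<in>S. IAS H' (\<sigma> x) w}"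
    using inj by (simp add: card_image inj_on_subset)
  also have "{x\<in>S. IAS H' (\<sigma> x) w} = {x\<in>S. IAS H x w \<noteq> (N \<and> IAS H x v)}"
    using S rel by auto
  finally have c: "card {y\<in>\<sigma>`S. IAS H' y w} = card {x\<in>S. IAS H x w \<noteq> (N \<and> IAS H x v)}" .
  show ?thesis
  proof (cases N)
    case True
    then show ?thesis unfolding colsum_def c using parity[OF fS] by simp
  next
    case False
    then show ?thesis unfolding colsum_def c by simp
  qed
qed

lemma rowop_sums:
  assumes inj: "inj \<sigma>" and fin: "finite (verts H)" and S: "S \<subseteq> W H" and v: "v \<in> verts H"
    and Nv: "\<not> N v"
    and rel: "\<And>x w. x \<in> W H \<Longrightarrow> w \<in> verts H \<Longrightarrow> IAS H' (\<sigma> x) w = (IAS H x w \<noteq> (N w \<and> IAS H x v))"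
  shows "(\<exists>w\<in>verts H. colsum H S w) \<longleftrightarrow> (\<exists>w\<in>verts H. colsum H' (\<sigma>`S) w)"
proof -
  have c: "colsum H' (\<sigma>`S) w = (colsum H S w \<noteq> (N w \<and> colsum H S v))" if "w \<in> verts H" for w
    by (rule rowop_colsum[OF inj fin S that rel]) (use that in auto)
  show ?thesis
  proof (cases "colsum H S v")
    case True
    then show ?thesis using c[OF v] v Nv by auto
  next
    case False
    then show ?thesis using c by auto
  qed
qed


lemma has_tn_transfer:
  fixes p :: "'v \<Rightarrow> label \<Rightarrow> label"
  assumes inv: "\<And>y l. p y (p y l) = l" and vv: "verts H' = verts H"
    and sums: "\<And>S. S \<subseteq> W H \<Longrightarrow> (\<exists>w\<in>verts H. colsum H S w) \<longleftrightarrow>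
          (\<exists>w\<in>verts H. colsum H' ((\<lambda>(l,y). (p y l, y))`S) w)"
  shows "has_transverse_nullity H \<nu> \<longleftrightarrow> has_transverse_nullity H' \<nu>"
proof -
  define \<sigma> where "\<sigma> = (\<lambda>(l::label,y::'v). (p y l, y))"
  have inj: "inj \<sigma>"
  proof (rule injI)
    fix a b assume "\<sigma> a = \<sigma> b"
    moreover obtain l1 y1 l2 y2 where ab: "a = (l1,y1)" "b = (l2,y2)" by force
    ultimately have "y1 = y2" "p y1 l1 = p y1 l2" unfolding \<sigma>_def by auto
    moreover have "l1 = p y1 (p y1 l1)" "l2 = p y1 (p y1 l2)" using inv by auto
    ultimately show "a = b" using ab by simp
  qed
  have sn: "snd (\<sigma> x) = snd x" for x unfolding \<sigma>_def by (cases x) auto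
  have img: "\<sigma> ` Tr t V = Tr (\<lambda>y. p y (t y)) V" for t V
    unfolding Tr_def \<sigma>_def image_image by simp
  have TW: "Tr t (verts H) \<subseteq> W H" for t unfolding Tr_def W_def by auto
  have nt: "nullity H' (Tr (\<lambda>y. p y (t y)) (verts H)) = nullity H (Tr t (verts H))" for t
    using nullity_transfer[OF inj sn vv sums[unfolded \<sigma>_def[symmetric]] TW] img by simp
  show ?thesis unfolding has_tn_Tr vv
  proof
    assume "\<exists>t. nullity H (Tr t (verts H)) = \<nu>"
    then obtain t where "nullity H (Tr t (verts H)) = \<nu>" by blast
    then show "\<exists>t. nullity H' (Tr t (verts H)) = \<nu>" using nt by metis
  next
    assume "\<exists>t. nullity H' (Tr t (verts H)) = \<nu>"
    then obtain t where t: "nullity H' (Tr t (verts H)) = \<nu>" by blast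
    have "(\<lambda>y. p y (p y (t y))) = t" using inv by simp
    then have "nullity H (Tr (\<lambda>y. p y (t y)) (verts H)) = \<nu>" using nt[of "\<lambda>y. p y (t y)"] t by simp
    then show "\<exists>t. nullity H (Tr t (verts H)) = \<nu>" by blast
  qed
qed

lemma nullity_perm:
  fixes p :: "'v \<Rightarrow> label \<Rightarrow> label"
  assumes inv: "\<And>y l. p y (p y l) = l" and vv: "verts H' = verts H"
    and sums: "\<And>S. S \<subseteq> W H \<Longrightarrow> (\<exists>w\<in>verts H. colsum H S w) \<longleftrightarrow>
          (\<exists>w\<in>verts H. colsum H' ((\<lambda>(l,y). (p y l, y))`S) w)"
  shows "nullity H' (Tr (\<lambda>y. p y (t y)) (verts H)) = nullity H (Tr t (verts H))"
proof -
  define \<sigma> where "\<sigma> = (\<lambda>(l::label,y::'v). (p y l, y))"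
  have inj: "inj \<sigma>"
  proof (rule injI)
    fix a b assume "\<sigma> a = \<sigma> b"
    moreover obtain l1 y1 l2 y2 where ab: "a = (l1,y1)" "b = (l2,y2)" by force
    ultimately have "y1 = y2" "p y1 l1 = p y1 l2" unfolding \<sigma>_def by auto
    moreover have "l1 = p y1 (p y1 l1)" "l2 = p y1 (p y1 l2)" using inv by auto
    ultimately show "a = b" using ab by simp
  qed
  have sn: "snd (\<sigma> x) = snd x" for x unfolding \<sigma>_def by (cases x) auto
  have img: "\<sigma> ` Tr t V = Tr (\<lambda>y. p y (t y)) V" for t V
    unfolding Tr_def \<sigma>_def image_image by simp
  have TW: "Tr t (verts H) \<subseteq> W H" for t unfolding Tr_def W_def by auto
  show ?thesis
    using nullity_transfer[OF inj sn vv sums[unfolded \<sigma>_def[symmetric]] TW] img by simp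
qed

fun swapCP :: "label \<Rightarrow> label" where
  "swapCP Phi = Phi" | "swapCP Chi = Psi" | "swapCP Psi = Chi"

lemma swapCP_inv: "swapCP (swapCP l) = l" by (cases l) auto

lemma has_tn_loops:
  assumes fin: "finite (verts H)" and vv: "verts H' = verts H" and aa: "adj H' = adj H"
  shows "has_transverse_nullity H \<nu> \<longleftrightarrow> has_transverse_nullity H' \<nu>"
proof -
  define p where "p y l = (if (y \<in> loops H) \<noteq> (y \<in> loops H') then swapCP l else l)" for y l
  have inv: "p y (p y l) = l" for y l unfolding p_def by (simp add: swapCP_inv)
  define \<sigma> where "\<sigma> = (\<lambda>(l,y). (p y l, y))"
  have inj: "inj \<sigma>"
  proof (rule injI)
    fix a b assume "\<sigma> a = \<sigma> b"
    moreover obtain l1 y1 l2 y2 where ab: "a = (l1,y1)" "b = (l2,y2)" by force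
    ultimately have "y1 = y2" "p y1 l1 = p y1 l2" unfolding \<sigma>_def by auto
    moreover have "l1 = p y1 (p y1 l1)" "l2 = p y1 (p y1 l2)" using inv by auto
    ultimately show "a = b" using ab by simp
  qed
  have rel: "IAS H' (\<sigma> x) w = (IAS H x w \<noteq> (False \<and> IAS H x w))" if "x \<in> W H" "w \<in> verts H" for x w
  proof -
    obtain l y where x: "x = (l,y)" by force
    show ?thesis unfolding x \<sigma>_def p_def by (cases l) (auto simp: adjmat_def aa)
  qed
  have sums: "(\<exists>w\<in>verts H. colsum H S w) \<longleftrightarrow> (\<exists>w\<in>verts H. colsum H' (\<sigma>`S) w)" if S: "S \<subseteq> W H" for S
  proof -
    have "colsum H' (\<sigma>`S) w = colsum H S w" if "w \<in> verts H" for w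
      using rowop_colsum[OF inj fin S that, of H' False w] rel that by simp
    then show ?thesis by auto
  qed
  show ?thesis by (rule has_tn_transfer[OF inv vv sums[unfolded \<sigma>_def]])
qed


lemma ns_simps:
  "verts (nonsimple_lc v H) = verts H"
  "adj (nonsimple_lc v H) = (\<lambda>x y. if x \<noteq> y \<and> adj H v x \<and> adj H v y then \<not> adj H x y else adj H x y)"
  "loops (nonsimple_lc v H) = {x \<in> verts H. (x \<in> loops H) \<noteq> adj H v x}"
  unfolding nonsimple_lc_def simple_lc_def by simp_all

lemma s_simps:
  "verts (simple_lc v H) = verts H"
  "adj (simple_lc v H) = (\<lambda>x y. if x \<noteq> y \<and> adj H v x \<and> adj H v y then \<not> adj H x y else adj H x y)"
  "loops (simple_lc v H) = loops H"
  unfolding simple_lc_def by simp_all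

lemma l_simps:
  "verts (loop_comp v H) = verts H"
  "adj (loop_comp v H) = adj H"
  "loops (loop_comp v H) = (if v \<in> loops H then loops H - {v} else insert v (loops H))"
  unfolding loop_comp_def by simp_all

fun lab_perm :: "bool \<Rightarrow> label \<Rightarrow> label" where
  "lab_perm True Phi = Chi" | "lab_perm True Chi = Phi" | "lab_perm True Psi = Psi"
| "lab_perm False Phi = Psi" | "lab_perm False Chi = Chi" | "lab_perm False Psi = Phi"

lemma lab_perm_inv: "lab_perm a (lab_perm a l) = l" by (cases a; cases l) auto

lemma has_tn_ns:
  assumes G: "looped_simple_graph H" and v: "v \<in> verts H"
  shows "has_transverse_nullity H \<nu> \<longleftrightarrow> has_transverse_nullity (nonsimple_lc v H) \<nu>"
    and "nullity (nonsimple_lc v H) (Tr (\<lambda>y. if y = v then lab_perm (v \<in> loops H) (t y) else t y) (verts H))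
         = nullity H (Tr t (verts H))"
proof -
  have fin: "finite (verts H)" and irr: "\<And>x. \<not> adj H x x" and sym: "\<And>x y. adj H x y = adj H y x"
    and av: "\<And>x y. adj H x y \<Longrightarrow> x \<in> verts H \<and> y \<in> verts H"
    using G unfolding looped_simple_graph_def by blast+
  define p where "p y l = (if y = v then lab_perm (v \<in> loops H) l else l)" for y l
  have inv: "p y (p y l) = l" for y l unfolding p_def by (simp add: lab_perm_inv)
  define \<sigma> where "\<sigma> = (\<lambda>(l,y). (p y l, y))"
  have inj: "inj \<sigma>"
  proof (rule injI)
    fix a b assume "\<sigma> a = \<sigma> b"
    moreover obtain l1 y1 l2 y2 where ab: "a = (l1,y1)" "b = (l2,y2)" by force
    ultimately have "y1 = y2" "p y1 l1 = p y1 l2" unfolding \<sigma>_def by auto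
    moreover have "l1 = p y1 (p y1 l1)" "l2 = p y1 (p y1 l2)" using inv by auto
    ultimately show "a = b" using ab by simp
  qed
  have rel: "IAS (nonsimple_lc v H) (\<sigma> x) w = (IAS H x w \<noteq> (adj H v w \<and> IAS H x v))"
    if "x \<in> W H" "w \<in> verts H" for x w
  proof -
    obtain l y where x: "x = (l,y)" by force
    have y: "y \<in> verts H" using that x unfolding W_def by auto
    show ?thesis
    proof (cases "y = v")
      case True
      then show ?thesis unfolding x \<sigma>_def p_def using irr sym that y
        by (cases l; cases "v \<in> loops H") (auto simp: adjmat_def ns_simps)
    next
      case False
      then show ?thesis unfolding x \<sigma>_def p_def using irr sym that y
        by (cases l) (auto simp: adjmat_def ns_simps)
    qed
  qed
  have sums: "(\<exists>w\<in>verts H. colsum H S w) \<longleftrightarrow> (\<exists>w\<in>verts H. colsum (nonsimple_lc v H) (\<sigma>`S) w)"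
    if S: "S \<subseteq> W H" for S
    by (rule rowop_sums[OF inj fin S v, of "adj H v"]) (use irr rel in auto)
  show "has_transverse_nullity H \<nu> \<longleftrightarrow> has_transverse_nullity (nonsimple_lc v H) \<nu>"
    by (rule has_tn_transfer[OF inv ns_simps(1) sums[unfolded \<sigma>_def]])
  show "nullity (nonsimple_lc v H) (Tr (\<lambda>y. if y = v then lab_perm (v \<in> loops H) (t y) else t y) (verts H))
         = nullity H (Tr t (verts H))"
    using nullity_perm[OF inv ns_simps(1) sums[unfolded \<sigma>_def], of t] unfolding p_def .
qed


lemma lsg_ops:
  assumes G: "looped_simple_graph H" and v: "v \<in> verts H"
  shows "looped_simple_graph (loop_comp v H)" "looped_simple_graph (simple_lc v H)"
    "looped_simple_graph (nonsimple_lc v H)"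
proof -
  have fin: "finite (verts H)" and lv: "loops H \<subseteq> verts H"
    and av: "\<And>x y. adj H x y \<Longrightarrow> x \<in> verts H \<and> y \<in> verts H \<and> x \<noteq> y"
    and sym: "\<And>x y. adj H x y \<longleftrightarrow> adj H y x"
    using G unfolding looped_simple_graph_def by blast+
  show "looped_simple_graph (loop_comp v H)"
    unfolding looped_simple_graph_def l_simps using fin lv av sym v by auto
  have s1: "(if x \<noteq> y \<and> adj H v x \<and> adj H v y then \<not> adj H x y else adj H x y) =
          (if y \<noteq> x \<and> adj H v y \<and> adj H v x then \<not> adj H y x else adj H y x)" for x y
      using sym[of x y] by auto
  have s2: "x \<in> verts H \<and> y \<in> verts H \<and> x \<noteq> y"
    if "if x \<noteq> y \<and> adj H v x \<and> adj H v y then \<not> adj H x y else adj H x y" for x y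
    using that av[of x y] av[of v x] av[of v y]
      by (cases "x \<noteq> y \<and> adj H v x \<and> adj H v y") auto
  have "looped_simple_graph (simple_lc v H)"
    unfolding looped_simple_graph_def s_simps using fin lv s1 s2 by blast
  then show "looped_simple_graph (simple_lc v H)" .
  moreover have "loops (nonsimple_lc v H) \<subseteq> verts H" by (auto simp: ns_simps)
  ultimately show "looped_simple_graph (nonsimple_lc v H)"
    unfolding looped_simple_graph_def s_simps ns_simps(1,2) by blast
qed

lemma has_tn_s:
  assumes G: "looped_simple_graph H" and v: "v \<in> verts H"
  shows "has_transverse_nullity H \<nu> \<longleftrightarrow> has_transverse_nullity (simple_lc v H) \<nu>"
proof -
  have fin: "finite (verts H)" using G unfolding looped_simple_graph_def by blast
  have "has_transverse_nullity (simple_lc v H) \<nu> \<longleftrightarrow> has_transverse_nullity (nonsimple_lc v H) \<nu>"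
    by (rule has_tn_loops) (use fin in \<open>simp_all add: s_simps ns_simps\<close>)
  then show ?thesis using has_tn_ns(1)[OF G v] by simp
qed

lemma le_inv:
  assumes "locally_equivalent G H" "looped_simple_graph G"
  shows "looped_simple_graph H \<and> verts H = verts G \<and> (\<forall>\<nu>. has_transverse_nullity G \<nu> \<longleftrightarrow> has_transverse_nullity H \<nu>)"
  using assms
proof (induction rule: locally_equivalent.induct)
  case (refl G) then show ?case by simp
next
  case (loop G H v)
  then have H: "looped_simple_graph H" by blast
  have fin: "finite (verts H)" using H unfolding looped_simple_graph_def by blast
  have "has_transverse_nullity H \<nu> \<longleftrightarrow> has_transverse_nullity (loop_comp v H) \<nu>" for \<nu>
    by (rule has_tn_loops) (use fin in \<open>simp_all add: l_simps\<close>)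
  then show ?case using loop lsg_ops[OF H loop(2)] by (simp add: l_simps)
next
  case (simple G H v)
  then have H: "looped_simple_graph H" by blast
  show ?case using simple lsg_ops[OF H simple(2)] has_tn_s[OF H simple(2)] by (simp add: s_simps)
next
  case (nonsimple G H v)
  then have H: "looped_simple_graph H" by blast
  show ?case using nonsimple lsg_ops[OF H nonsimple(2)] has_tn_ns(1)[OF H nonsimple(2)] by (simp add: ns_simps)
qed

lemma le_trans:
  assumes "locally_equivalent H K" "locally_equivalent G H"
  shows "locally_equivalent G K"
  using assms by (induction rule: locally_equivalent.induct) (auto intro: locally_equivalent.intros)

lemma card_Tr: "card (Tr t V) = card V"
  unfolding Tr_def by (rule card_image) (auto intro: inj_onI)

lemma mrank_ge:
  assumes fin: "finite (verts H)" and I: "I \<subseteq> T" "indep H I"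
  shows "card I \<le> mrank H T"
proof -
  have "finite T \<or> \<not> T \<subseteq> W H" using finite_subset finite_W[OF fin] by blast
  have sub: "I \<subseteq> W H" using I unfolding indep_def by blast
  have "{card I | I. I \<subseteq> T \<and> indep H I} \<subseteq> card ` {I. I \<subseteq> T \<and> I \<subseteq> W H}"
    unfolding indep_def by auto
  moreover have "finite {I. I \<subseteq> T \<and> I \<subseteq> W H}"
    using finite_W[OF fin] by (rule rev_finite_subset[OF finite_Pow_iff[THEN iffD2]]) auto
  ultimately have "finite {card I | I. I \<subseteq> T \<and> indep H I}" using finite_subset by blast
  then show ?thesis unfolding mrank_def using I by (auto intro: Max_ge)
qed

lemma mrank_le:
  assumes fin: "finite (verts H)" and b: "\<And>I. I \<subseteq> T \<Longrightarrow> indep H I \<Longrightarrow> card I \<le> b"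
  shows "mrank H T \<le> b"
proof -
  have "{card I | I. I \<subseteq> T \<and> indep H I} \<subseteq> card ` {I. I \<subseteq> T \<and> I \<subseteq> W H}"
    unfolding indep_def by auto
  moreover have "finite {I. I \<subseteq> T \<and> I \<subseteq> W H}"
    using finite_W[OF fin] by (rule rev_finite_subset[OF finite_Pow_iff[THEN iffD2]]) auto
  ultimately have f: "finite {card I | I. I \<subseteq> T \<and> indep H I}" using finite_subset by blast
  have "indep H {}" unfolding indep_def by auto
  then have ne: "{card I | I. I \<subseteq> T \<and> indep H I} \<noteq> {}" by blast
  show ?thesis unfolding mrank_def using f ne b by (auto simp: Max_le_iff)
qed

lemma phi_part:
  assumes fin: "finite (verts H)"
  shows "card {v\<in>verts H. t v = Phi} \<le> mrank H (Tr t (verts H))"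
proof -
  define I where "I = Tr t {v\<in>verts H. t v = Phi}"
  have "I \<subseteq> Tr t (verts H)" unfolding I_def Tr_def by (intro image_mono) auto
  moreover have "indep H I"
    unfolding indep_def
  proof (intro conjI allI impI)
    show "I \<subseteq> W H" unfolding I_def Tr_def W_def by auto
    fix S' assume S': "S' \<subseteq> I" "S' \<noteq> {}"
    then obtain u where u: "(Phi,u) \<in> S'" "u \<in> verts H" unfolding I_def Tr_def by auto
    have "{x\<in>S'. IAS H x u} = {(Phi,u)}"
    proof (intro equalityI subsetI)
      fix x assume x: "x \<in> {x\<in>S'. IAS H x u}"
      then have "x \<in> I" using S' by auto
      then obtain y where "x = (Phi,y)" unfolding I_def Tr_def by auto
      with x show "x \<in> {(Phi,u)}" by auto
    qed (use u in auto)
    then have "odd (card {x \<in> S'. IAS H x u})" by simp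
    then show "\<exists>w\<in>verts H. odd (card {x \<in> S'. IAS H x w})" using u(2) by blast
  qed
  ultimately have "card I \<le> mrank H (Tr t (verts H))" by (rule mrank_ge[OF fin])
  then show ?thesis unfolding I_def card_Tr .
qed

lemma nullity_le:
  assumes fin: "finite (verts H)"
  shows "nullity H (Tr t (verts H)) \<le> card {v\<in>verts H. t v \<noteq> Phi}"
proof -
  have "card (verts H) = card {v\<in>verts H. t v = Phi} + card {v\<in>verts H. t v \<noteq> Phi}"
  proof -
    have e: "{v\<in>verts H. t v \<noteq> Phi} = verts H - {v\<in>verts H. t v = Phi}" by auto
    have "card {v\<in>verts H. t v = Phi} \<le> card (verts H)" using fin by (intro card_mono) auto
    then show ?thesis unfolding e using fin by (subst card_Diff_subset) auto
  qed
  then show ?thesis unfolding nullity_def card_Tr using phi_part[OF fin, of t] by linarith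
qed


lemma stable_tn:
  assumes G: "looped_simple_graph H" and S: "stable_set H S"
  shows "has_transverse_nullity H (card S)"
proof -
  have fin: "finite (verts H)" and irr: "\<And>x. \<not> adj H x x"
    using G unfolding looped_simple_graph_def by blast+
  have SV: "S \<subseteq> verts H" and st: "\<And>x y. x \<in> S \<Longrightarrow> y \<in> S \<Longrightarrow> \<not> adj H x y"
    using S unfolding stable_set_def by blast+
  define V where "V = verts H"
  define t where "t v = (if v \<in> S then (if v \<in> loops H then Psi else Chi) else Phi)" for v
  define T where "T = Tr t V"
  have finV: "finite V" using fin V_def by simp
  have zero: "\<not> IAS H x w" if "x \<in> T" "w \<in> S" for x w
  proof -
    from that obtain y where y: "y \<in> V" "x = (t y, y)" unfolding T_def Tr_def by auto
    show ?thesis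
    proof (cases "y \<in> S")
      case True
      then show ?thesis using y that st[of w y]
        by (cases "y \<in> loops H") (auto simp: t_def adjmat_def)
    next
      case False
      then show ?thesis using y that by (auto simp: t_def)
    qed
  qed
  have ph: "{v\<in>V. t v = Phi} = V - S" unfolding t_def by auto
  have lower: "card (V - S) \<le> mrank H T"
    using phi_part[OF fin, of t] unfolding T_def V_def[symmetric] ph .
  have upper: "mrank H T \<le> card (V - S)"
  proof (rule mrank_le[OF fin])
    fix I assume IT: "I \<subseteq> T" and ind: "indep H I"
    have finI: "finite I" using IT finV unfolding T_def Tr_def by (auto intro: finite_subset)
    define f where "f A = {w\<in>V. colsum H A w}" for A
    have fsub: "f A \<subseteq> V - S" if "A \<in> Pow I" for A
    proof
      fix w assume w: "w \<in> f A"
      have "w \<notin> S"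
      proof
        assume "w \<in> S"
        then have e: "{x\<in>A. IAS H x w} = {}" using zero that IT by auto
        from w have "odd (card {x\<in>A. IAS H x w})" unfolding f_def colsum_def by simp
        then show False unfolding e by simp
      qed
      then show "w \<in> V - S" using w unfolding f_def by auto
    qed
    show "card I \<le> card (V - S)"
    proof (rule ccontr)
      assume "\<not> card I \<le> card (V - S)"
      then have lt: "card (Pow (V - S)) < card (Pow I)"
        using finI finV by (simp add: card_Pow)
      have "\<not> inj_on f (Pow I)"
      proof
        assume "inj_on f (Pow I)"
        then have "card (Pow I) \<le> card (Pow (V - S))"
          by (rule card_inj_on_le) (use fsub finV in auto)
        with lt show False by simp
      qed
      then obtain A B where AB: "A \<in> Pow I" "B \<in> Pow I" "A \<noteq> B" "f A = f B"
        unfolding inj_on_def by blast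
      define C where "C = (A - B) \<union> (B - A)"
      have "C \<subseteq> I" "C \<noteq> {}" using AB unfolding C_def by auto
      with ind obtain w where w: "w \<in> verts H" "odd (card {x\<in>C. IAS H x w})"
        unfolding indep_def by blast
      have fA: "finite A" "finite B" using AB finI by (auto intro: finite_subset)
      have "odd (card {x\<in>C. IAS H x w}) = (colsum H A w \<noteq> colsum H B w)"
        unfolding C_def colsum_def by (rule parity_diff[OF fA])
      moreover have "colsum H A w = colsum H B w"
        using AB(4) w(1) unfolding f_def V_def by blast
      ultimately show False using w by simp
    qed
  qed
  have "card T = card V" unfolding T_def by (rule card_Tr)
  then have "nullity H T = card S"
  proof -
    have SV': "S \<subseteq> V" using SV V_def by simp
    have "card (V - S) = card V - card S" using SV' finV by (simp add: card_Diff_subset finite_subset)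
    moreover have "card S \<le> card V" using SV' finV by (rule card_mono[rotated])
    ultimately show ?thesis unfolding nullity_def using lower upper \<open>card T = card V\<close> by linarith
  qed
  then show ?thesis unfolding has_tn_Tr T_def V_def by blast
qed


definition diag1 :: "'v lgraph \<Rightarrow> ('v \<Rightarrow> label) \<Rightarrow> 'v \<Rightarrow> bool" where
  "diag1 H t v \<longleftrightarrow> (t v = Chi \<and> v \<in> loops H) \<or> (t v = Psi \<and> v \<notin> loops H)"

lemma stepA:
  assumes G: "looped_simple_graph H" and v: "v \<in> verts H" and d: "diag1 H t v"
  shows "nullity (nonsimple_lc v H) (Tr (t(v:=Phi)) (verts H)) = nullity H (Tr t (verts H))"
proof -
  have "(\<lambda>y. if y = v then lab_perm (v \<in> loops H) (t y) else t y) = t(v:=Phi)"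
    using d unfolding diag1_def by (auto simp: fun_eq_iff)
  then show ?thesis using has_tn_ns(2)[OF G v, of t] by simp
qed

lemma stepB:
  assumes G: "looped_simple_graph H" and v: "v \<in> verts H" and d: "\<not> diag1 H t v" and np: "t v \<noteq> Phi"
  shows "nullity (nonsimple_lc v H) (Tr t (verts H)) = nullity H (Tr t (verts H))"
proof -
  have "(\<lambda>y. if y = v then lab_perm (v \<in> loops H) (t y) else t y) = t"
    using d np unfolding diag1_def by (cases "t v"; cases "v \<in> loops H") (auto simp: fun_eq_iff)
  then show ?thesis using has_tn_ns(2)[OF G v, of t] by simp
qed


lemma main_fwd:
  "looped_simple_graph (H :: 'v lgraph) \<Longrightarrow> card {v\<in>verts H. t v \<noteq> Phi} = n \<Longrightarrow>
   \<exists>H' S. locally_equivalent H H' \<and> stable_set H' S \<and> nullity H (Tr t (verts H)) \<le> card S"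
proof (induction n arbitrary: H t rule: less_induct)
  case (less n)
  note G = less.prems(1)
  have fin: "finite (verts H)" using G unfolding looped_simple_graph_def by blast
  have A: "\<exists>H' S. locally_equivalent H H' \<and> stable_set H' S \<and> nullity H (Tr t (verts H)) \<le> card S"
    if G: "looped_simple_graph H" and fin: "finite (verts H)" and v: "v \<in> verts H" and d: "diag1 H t v"
      and cn: "card {v\<in>verts H. t v \<noteq> Phi} = n"
    for H :: "'v lgraph" and t v
  proof -
    let ?H1 = "nonsimple_lc v H"
    have G1: "looped_simple_graph ?H1" by (rule lsg_ops(3)[OF G v])
    have nl: "nullity ?H1 (Tr (t(v:=Phi)) (verts ?H1)) = nullity H (Tr t (verts H))"
      using stepA[OF G v d] by (simp add: ns_simps)
    have tv: "t v \<noteq> Phi" using d unfolding diag1_def by auto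
    have e: "{y\<in>verts ?H1. (t(v:=Phi)) y \<noteq> Phi} = {y\<in>verts H. t y \<noteq> Phi} - {v}"
      by (auto simp: ns_simps)
    have lt: "card {y\<in>verts ?H1. (t(v:=Phi)) y \<noteq> Phi} < n"
      unfolding e cn[symmetric] using fin v tv by (intro psubset_card_mono) auto
    have "\<exists>H' S. locally_equivalent ?H1 H' \<and> stable_set H' S \<and> nullity ?H1 (Tr (t(v:=Phi)) (verts ?H1)) \<le> card S"
      using less.IH[OF lt G1] by blast
    then obtain H' S where
      H': "locally_equivalent ?H1 H'" "stable_set H' S" "nullity ?H1 (Tr (t(v:=Phi)) (verts ?H1)) \<le> card S"
      by blast
    have "locally_equivalent H ?H1" using locally_equivalent.nonsimple[OF locally_equivalent.refl v] .
    then have "locally_equivalent H H'" using le_trans[OF H'(1)] by blast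
    then show ?thesis using H' nl by auto
  qed
  show ?case
  proof (cases "\<exists>v\<in>verts H. diag1 H t v")
    case True
    then obtain v where "v \<in> verts H" "diag1 H t v" by blast
    then show ?thesis using A[OF G fin _ _ less.prems(2)] by blast
  next
    case nd: False
    show ?thesis
    proof (cases "\<exists>u\<in>verts H. \<exists>w\<in>verts H. t u \<noteq> Phi \<and> t w \<noteq> Phi \<and> adj H u w")
      case True
      then obtain u w where uw: "u \<in> verts H" "w \<in> verts H" "t u \<noteq> Phi" "t w \<noteq> Phi" "adj H u w" by blast
      let ?H1 = "nonsimple_lc w H"
      have G1: "looped_simple_graph ?H1" by (rule lsg_ops(3)[OF G uw(2)])
      have nl: "nullity ?H1 (Tr t (verts ?H1)) = nullity H (Tr t (verts H))"
        using stepB[OF G uw(2)] nd uw by (simp add: ns_simps)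
      have sym: "adj H w u" using G uw(5) unfolding looped_simple_graph_def by blast
      have "diag1 ?H1 t u" using nd uw(1,3) sym
        unfolding diag1_def ns_simps by (cases "t u") auto
      from A[OF G1 _ _ this] fin uw(1) less.prems(2) obtain H' S where
        H': "locally_equivalent ?H1 H'" "stable_set H' S" "nullity ?H1 (Tr t (verts ?H1)) \<le> card S"
        by (auto simp: ns_simps)
      have "locally_equivalent H ?H1" using locally_equivalent.nonsimple[OF locally_equivalent.refl uw(2)] .
      then have "locally_equivalent H H'" using le_trans[OF H'(1)] by blast
      then show ?thesis using H' nl by auto
    next
      case False
      let ?Q = "{v\<in>verts H. t v \<noteq> Phi}"
      have "stable_set H ?Q" unfolding stable_set_def using False by auto
      moreover have "nullity H (Tr t (verts H)) \<le> card ?Q" by (rule nullity_le[OF fin])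
      ultimately show ?thesis using locally_equivalent.refl by blast
    qed
  qed
qed

theorem corollary1p3:
  fixes G :: "'v lgraph" and \<nu> :: nat
  assumes "looped_simple_graph G" and "\<nu> > 0"
  shows "has_transverse_nullity G \<nu> \<longleftrightarrow>
         (\<exists>H S. locally_equivalent G H \<and> stable_set H S \<and> card S = \<nu>)"
proof
  assume "has_transverse_nullity G \<nu>"
  then obtain t where t: "nullity G (Tr t (verts G)) = \<nu>" unfolding has_tn_Tr by blast
  from main_fwd[OF assms(1) HOL.refl, of t] obtain H S where
    H: "locally_equivalent G H" "stable_set H S" "\<nu> \<le> card S" using t by blast
  have lsg: "looped_simple_graph H" using le_inv[OF H(1) assms(1)] by blast
  have fS: "finite S" using H(2) lsg unfolding stable_set_def looped_simple_graph_def
    by (auto intro: finite_subset)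
  obtain S' where S': "S' \<subseteq> S" "card S' = \<nu>" using obtain_subset_with_card_n[OF H(3)] by blast
  have "stable_set H S'" using H(2) S'(1) unfolding stable_set_def by blast
  then show "\<exists>H S. locally_equivalent G H \<and> stable_set H S \<and> card S = \<nu>" using H(1) S'(2) by blast
next
  assume "\<exists>H S. locally_equivalent G H \<and> stable_set H S \<and> card S = \<nu>"
  then obtain H S where H: "locally_equivalent G H" "stable_set H S" "card S = \<nu>" by blast
  have inv: "looped_simple_graph H \<and> verts H = verts G \<and>
     (\<forall>\<nu>. has_transverse_nullity G \<nu> \<longleftrightarrow> has_transverse_nullity H \<nu>)"
    by (rule le_inv[OF H(1) assms(1)])
  then have "has_transverse_nullity H \<nu>" using stable_tn[OF _ H(2)] H(3) by blast
  then show "has_transverse_nullity G \<nu>" using inv by blast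
qed

end
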